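(* Let $M\ge1$, $\beta,\hat\beta>0$, and suppose $$\beta^{-1}<1+(M-1)\,m_0(\hat\beta)^2 .$$ Then $\mathbf{p}=\mathbf{0}$ is not a global maximizer of $$g(\mathbf{p};\hat\beta,\beta)=\log2-\frac{\beta|\mathbf{p}|^2}{2}+\big\langle\log\cosh(\beta\,\mathbf{s}\cdot\mathbf{p})\big\rangle_{\mathbf{s},\hat\beta},\qquad\mathbf{p}\in\mathbb{R}^M,$$ the scalar equation $p=\big\langle s_1\tanh\big(\beta p\sum_{\mu=1}^M s_\mu\big)\big\rangle_{\mathbf{s},\hat\beta}$ has exactly one solution $\bar p>0$, and $\mathbf{p}=\pm\bar p\,\mathbf{1}$ are solutions of $\mathbf{p}=\langle\mathbf{s}\tanh(\beta\,\mathbf{s}\cdot\mathbf{p})\rangle_{\mathbf{s},\hat\beta}$.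
   Context: $m_0(\hat\beta)$ is the largest nonnegative solution of $m=\tanh(\hat\beta m)$. $\langle\cdot\rangle_{\mathbf{s},\hat\beta}$ denotes expectation over $\mathbf{s}=(s_1,\dots,s_M)\in\{-1,1\}^M$ with i.i.d. entries of mean $m_0(\hat\beta)$. *)

theory Defs
  imports "HOL-Analysis.Analysis" "HOL-Library.FuncSet"
begin

definition m0 :: "real \<Rightarrow> real" where
  "m0 bh = (GREATEST m. m \<ge> 0 \<and> m = tanh (bh * m))"

definition spins :: "nat \<Rightarrow> (nat \<Rightarrow> real) set" where
  "spins M = PiE {..<M} (\<lambda>_. {-1, 1})"

text \<open>Expectation over s with i.i.d. entries of mean m0(bh):
  P(s_mu = x) = (1 + m0 bh * x)/2 for x in {-1,1}.\<close>
definition avg :: "nat \<Rightarrow> real \<Rightarrow> ((nat \<Rightarrow> real) \<Rightarrow> real) \<Rightarrow> real" where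
  "avg M bh f = (\<Sum>s\<in>spins M. (\<Prod>\<mu><M. (1 + m0 bh * s \<mu>) / 2) * f s)"

definition gfun :: "nat \<Rightarrow> real \<Rightarrow> real \<Rightarrow> (nat \<Rightarrow> real) \<Rightarrow> real" where
  "gfun M bh b p = ln 2 - b * (\<Sum>\<mu><M. (p \<mu>)^2) / 2
     + avg M bh (\<lambda>s. ln (cosh (b * (\<Sum>\<mu><M. s \<mu> * p \<mu>))))"

end

theory Submission
  imports Defs "HOL-Combinatorics.Transposition"
begin


lemma m0_bounds: "0 \<le> m0 bh \<and> m0 bh < 1"
proof -
  define A where "A = {m::real. m \<ge> 0 \<and> m = tanh (bh * m)}"
  have cA: "closed A" unfolding A_def
    by (intro closed_Collect_conj closed_Collect_le closed_Collect_eq continuous_intros) auto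
  have ne: "A \<noteq> {}" unfolding A_def by auto
  have bd: "m < 1" if "m \<in> A" for m
  proof -
    have "m = tanh (bh * m)" using that by (simp add: A_def)
    then show ?thesis using tanh_real_lt_1[of "bh*m"] by simp
  qed
  have bdd: "bdd_above A" using bd by (meson bdd_above.unfold less_imp_le)
  have SA: "Sup A \<in> A" by (rule closed_contains_Sup[OF ne bdd cA])
  have "m0 bh = Sup A" unfolding m0_def
    apply (rule Greatest_equality)
    using SA apply (simp add: A_def)
    using bdd by (auto intro!: cSup_upper simp: A_def)
  then show ?thesis using SA bd[OF SA] by (simp add: A_def)
qed

lemma finite_spins: "finite (spins M)"
  unfolding spins_def by (intro finite_PiE) auto

lemma spins_val: "s \<in> spins M \<Longrightarrow> \<mu> < M \<Longrightarrow> s \<mu> = 1 \<or> s \<mu> = -1"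
  unfolding spins_def by (auto simp: PiE_iff)

lemma w_pos: "s \<in> spins M \<Longrightarrow> 0 < (\<Prod>\<mu><M. (1 + m0 bh * s \<mu>) / 2)"
proof (intro prod_pos ballI)
  fix \<mu> assume "s \<in> spins M" "\<mu> \<in> {..<M}"
  then have "s \<mu> = 1 \<or> s \<mu> = -1" using spins_val by auto
  then show "0 < (1 + m0 bh * s \<mu>) / 2" using m0_bounds[of bh] by auto
qed

lemma avg_add: "avg M bh (\<lambda>s. f s + g s) = avg M bh f + avg M bh g"
  unfolding avg_def by (simp add: distrib_left sum.distrib)

lemma avg_cmult: "avg M bh (\<lambda>s. c * f s) = c * avg M bh f"
  unfolding avg_def by (simp add: sum_distrib_left algebra_simps)

lemma avg_minus: "avg M bh (\<lambda>s. - f s) = - avg M bh f"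
  using avg_cmult[of M bh "-1" f] by simp

lemma avg_diff: "avg M bh (\<lambda>s. f s - g s) = avg M bh f - avg M bh g"
  using avg_add[of M bh f "\<lambda>s. - g s"] avg_minus[of M bh g] by simp

lemma avg_sum: "avg M bh (\<lambda>s. \<Sum>i\<in>I. f i s) = (\<Sum>i\<in>I. avg M bh (f i))"
  unfolding avg_def by (simp add: sum_distrib_left sum.swap[of _ I])

lemma avg_cong: "(\<And>s. s \<in> spins M \<Longrightarrow> f s = g s) \<Longrightarrow> avg M bh f = avg M bh g"
  unfolding avg_def by (intro sum.cong) auto

lemma avg_mono: "(\<And>s. s \<in> spins M \<Longrightarrow> f s \<le> g s) \<Longrightarrow> avg M bh f \<le> avg M bh g"
  unfolding avg_def by (intro sum_mono mult_left_mono) (auto intro: less_imp_le w_pos)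

lemma avg_pos: assumes "\<And>s. s \<in> spins M \<Longrightarrow> 0 \<le> f s" and s0: "s0 \<in> spins M" and "0 < f s0" shows "0 < avg M bh f"
  unfolding avg_def
  apply (rule sum_pos2[OF finite_spins s0])
  using assms w_pos[OF s0, of bh] apply simp
  using assms w_pos by (simp add: less_imp_le)

lemma avg_moment:
  assumes "J \<subseteq> {..<M}"
  shows "avg M bh (\<lambda>s. \<Prod>i\<in>J. s i) = m0 bh ^ card J"
proof -
  define h where "h = (\<lambda>i (x::real). (1 + m0 bh * x) / 2 * (if i \<in> J then x else 1))"
  have "avg M bh (\<lambda>s. \<Prod>i\<in>J. s i) = (\<Sum>s\<in>spins M. \<Prod>i<M. h i (s i))"
    unfolding avg_def h_def
  proof (intro sum.cong refl)
    fix s :: "nat \<Rightarrow> real"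
    have "(\<Prod>i\<in>J. s i) = (\<Prod>i<M. (if i \<in> J then s i else 1))"
      by (simp add: prod.If_cases Int_absorb2[OF assms] Int_commute)
    then show "(\<Prod>\<mu><M. (1 + m0 bh * s \<mu>) / 2) * (\<Prod>i\<in>J. s i) =
         (\<Prod>i<M. (1 + m0 bh * s i) / 2 * (if i \<in> J then s i else 1))"
      by (simp only: prod.distrib[symmetric])
  qed
  also have "\<dots> = (\<Prod>i<M. \<Sum>y\<in>{-1,1}. h i y)"
    unfolding spins_def by (rule prod_sum_PiE[symmetric]) auto
  also have "\<dots> = (\<Prod>i<M. (if i \<in> J then m0 bh else 1))"
    by (intro prod.cong) (auto simp: h_def field_simps)
  also have "\<dots> = m0 bh ^ card J"
    by (simp add: prod.If_cases Int_absorb2[OF assms] Int_commute)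
  finally show ?thesis .
qed



lemma transp_bij: fixes \<mu> M :: nat assumes "\<mu> < M" shows "bij_betw (Transposition.transpose 0 \<mu>) {..<M} {..<M}"
proof -
  have "0 < M" using assms by linarith
  then show ?thesis by (intro permutes_imp_bij[OF permutes_swap_id]) (use assms in auto)
qed

lemma swap_mem: fixes \<mu> M :: nat assumes "\<mu> < M" "s \<in> spins M" shows "s \<circ> Transposition.transpose 0 \<mu> \<in> spins M"
proof -
  have "Transposition.transpose 0 \<mu> i < M \<longleftrightarrow> i < M" for i
    using assms(1) by (cases "i = 0"; cases "i = \<mu>") (auto)
  moreover have "i \<ge> M \<Longrightarrow> Transposition.transpose 0 \<mu> i = i" for i
    using assms(1) by (auto simp: transpose_def)
  ultimately show ?thesis using assms(2) unfolding spins_def PiE_iff extensional_def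
    by auto
qed

lemma avg_swap:
  fixes \<mu> :: nat assumes "\<mu> < M"
  shows "avg M bh (\<lambda>s. s \<mu> * F (\<Sum>\<nu><M. s \<nu>)) = avg M bh (\<lambda>s. s 0 * F (\<Sum>\<nu><M. s \<nu>))"
  unfolding avg_def
proof (rule sum.reindex_bij_witness[where i="\<lambda>s. s \<circ> Transposition.transpose 0 \<mu>" and j="\<lambda>s. s \<circ> Transposition.transpose 0 \<mu>"])
  fix s assume s: "s \<in> spins M"
  show "s \<circ> Transposition.transpose 0 \<mu> \<circ> Transposition.transpose 0 \<mu> = s" by (simp add: fun_eq_iff)
  show "s \<circ> Transposition.transpose 0 \<mu> \<in> spins M" by (rule swap_mem[OF assms s])
  have W: "(\<Prod>i<M. (1 + m0 bh * (s \<circ> Transposition.transpose 0 \<mu>) i) / 2) = (\<Prod>i<M. (1 + m0 bh * s i) / 2)"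
    using prod.reindex_bij_betw[OF transp_bij[OF assms], of "\<lambda>i. (1 + m0 bh * s i) / 2"] by simp
  have S: "(\<Sum>i<M. (s \<circ> Transposition.transpose 0 \<mu>) i) = (\<Sum>i<M. s i)"
    using sum.reindex_bij_betw[OF transp_bij[OF assms], of "\<lambda>i. s i"] by simp
  show "(\<Prod>i<M. (1 + m0 bh * (s \<circ> Transposition.transpose 0 \<mu>) i) / 2) * ((s \<circ> Transposition.transpose 0 \<mu>) 0 * F (\<Sum>\<nu><M. (s \<circ> Transposition.transpose 0 \<mu>) \<nu>)) =
        (\<Prod>\<mu><M. (1 + m0 bh * s \<mu>) / 2) * (s \<mu> * F (\<Sum>\<nu><M. s \<nu>))"
    using W S by simp
qed (auto simp: fun_eq_iff intro: swap_mem[OF assms])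

lemma avg_S:
  assumes "M \<ge> 1"
  shows "avg M bh (\<lambda>s. (\<Sum>\<nu><M. s \<nu>) * F (\<Sum>\<nu><M. s \<nu>)) = real M * avg M bh (\<lambda>s. s 0 * F (\<Sum>\<nu><M. s \<nu>))"
proof -
  have "avg M bh (\<lambda>s. (\<Sum>\<nu><M. s \<nu>) * F (\<Sum>\<nu><M. s \<nu>)) = (\<Sum>\<mu><M. avg M bh (\<lambda>s. s \<mu> * F (\<Sum>\<nu><M. s \<nu>)))"
    by (simp add: sum_distrib_right avg_sum)
  also have "\<dots> = (\<Sum>\<mu><M. avg M bh (\<lambda>s. s 0 * F (\<Sum>\<nu><M. s \<nu>)))"
    by (intro sum.cong refl avg_swap) auto
  finally show ?thesis by simp
qed

lemma tanh_diff_bound: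
  fixes x y :: real assumes "0 < x" "x < y"
  shows "x * tanh y < y * tanh x"
proof -
  have D: "DERIV tanh t :> 1 - tanh t ^ 2" for t :: real
    using has_field_derivative_tanh[OF _ DERIV_ident, of t] by simp
  obtain z where z: "x < z" "z < y" "tanh y - tanh x = (y - x) * (1 - tanh z ^ 2)"
    using MVT2[OF assms(2), of tanh "\<lambda>t. 1 - tanh t ^ 2"] D by blast
  obtain e where e: "0 < e" "e < x" "tanh x - tanh 0 = (x - 0) * (1 - tanh e ^ 2)"
    using MVT2[OF assms(1), of tanh "\<lambda>t. 1 - tanh t ^ 2"] D by blast
  have "0 < tanh e" "tanh e < tanh z" using e z tanh_real_strict_mono
    by (auto simp: strict_mono_def)
  then have "tanh e ^ 2 < tanh z ^ 2" by (simp add: power_strict_mono)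
  then have "(y - x) * (1 - tanh z ^ 2) * x < (y - x) * (1 - tanh e ^ 2) * x"
    using assms by (intro mult_strict_right_mono mult_strict_left_mono) auto
  moreover have "(tanh y - tanh x) * x = (y - x) * (1 - tanh z ^ 2) * x" using z(3) by simp
  moreover have "(y - x) * tanh x = (y - x) * (1 - tanh e ^ 2) * x" using e(3) by simp
  ultimately have "(tanh y - tanh x) * x < (y - x) * tanh x" by linarith
  then show ?thesis by (simp add: algebra_simps)
qed

lemma avg_deriv:
  assumes "\<And>s. s \<in> spins M \<Longrightarrow> DERIV (f s) t :> f' s"
  shows "DERIV (\<lambda>t. avg M bh (\<lambda>s. f s t)) t :> avg M bh f'"
  unfolding avg_def
  by (intro DERIV_sum DERIV_cmult assms)



lemma stanh_abs: "(x::real) * tanh (c * x) = \<bar>x\<bar> * tanh (c * \<bar>x\<bar>)"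
  by (cases "x \<ge> 0") (auto simp: tanh_minus)

lemma term_pos:
  fixes x p q b :: real
  assumes "0 < p" "p < q" "0 < b"
  shows "0 \<le> q * (x * tanh (b * p * x)) - p * (x * tanh (b * q * x))"
    and "x \<noteq> 0 \<Longrightarrow> 0 < q * (x * tanh (b * p * x)) - p * (x * tanh (b * q * x))"
proof -
  have key: "0 < q * (x * tanh (b * p * x)) - p * (x * tanh (b * q * x))" if x: "x \<noteq> 0"
  proof -
    define a where "a = \<bar>x\<bar>"
    have a: "0 < a" using x by (simp add: a_def)
    have e1: "x * tanh (b * p * x) = a * tanh (b * p * a)" unfolding a_def by (rule stanh_abs)
    have e2: "x * tanh (b * q * x) = a * tanh (b * q * a)" unfolding a_def by (rule stanh_abs)
    have "(b * p * a) * tanh (b * q * a) < (b * q * a) * tanh (b * p * a)"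
      using assms a by (intro tanh_diff_bound) (auto intro: mult_pos_pos mult_strict_right_mono mult_strict_left_mono)
    then have "(b * a) * (p * tanh (b * q * a)) < (b * a) * (q * tanh (b * p * a))"
      by (simp add: mult_ac)
    then have "p * tanh (b * q * a) < q * tanh (b * p * a)"
      using assms a by (simp add: mult_less_cancel_left_pos)
    then have "a * (p * tanh (b * q * a)) < a * (q * tanh (b * p * a))"
      using a by simp
    then show ?thesis using e1 e2 by (simp add: algebra_simps)
  qed
  then show "x \<noteq> 0 \<Longrightarrow> 0 < q * (x * tanh (b * p * x)) - p * (x * tanh (b * q * x))" .
  show "0 \<le> q * (x * tanh (b * p * x)) - p * (x * tanh (b * q * x))"
    using key by (cases "x = 0") (auto intro: less_imp_le)
qed



theorem mainTheorem7:
  fixes M :: nat and b bh :: real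
  assumes "M \<ge> 1" and "b > 0" and "bh > 0"
    and "1 / b < 1 + (real M - 1) * (m0 bh)^2"
  shows "(\<exists>p :: nat \<Rightarrow> real. gfun M bh b p > gfun M bh b (\<lambda>_. 0))
    \<and> (\<exists>!pb :: real. pb > 0 \<and> pb = avg M bh (\<lambda>s. s 0 * tanh (b * pb * (\<Sum>\<mu><M. s \<mu>))))
    \<and> (\<forall>pb :: real. pb > 0 \<and> pb = avg M bh (\<lambda>s. s 0 * tanh (b * pb * (\<Sum>\<mu><M. s \<mu>)))
        \<longrightarrow> (\<forall>\<sigma> \<in> {1, -1::real}. \<forall>\<mu><M.
              \<sigma> * pb = avg M bh (\<lambda>s. s \<mu> * tanh (b * (\<Sum>\<nu><M. s \<nu> * (\<sigma> * pb))))))"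
proof -
  define m where "m = m0 bh"
  define F where "F p = avg M bh (\<lambda>s. s 0 * tanh (b * p * (\<Sum>\<mu><M. s \<mu>)))" for p
  define H where "H p = F p - p" for p
  have M0: "0 < M" using assms(1) by linarith
  have avg1: "avg M bh (\<lambda>_. 1) = 1"
    using avg_moment[of "{}" M bh] by simp
  have avg0: "avg M bh (\<lambda>_. 0) = 0"
    using avg_cmult[of M bh 0 "\<lambda>_. 1"] by simp
  have FS: "avg M bh (\<lambda>s. (\<Sum>\<nu><M. s \<nu>) * tanh (b * p * (\<Sum>\<nu><M. s \<nu>))) = real M * F p" for p
    unfolding F_def by (rule avg_S[OF assms(1), of bh "\<lambda>x. tanh (b * p * x)"])
  have dF: "DERIV F p :> avg M bh (\<lambda>s. s 0 * ((1 - tanh (b * p * (\<Sum>\<mu><M. s \<mu>)) ^ 2) * (b * (\<Sum>\<mu><M. s \<mu>))))" for p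
    unfolding F_def
    by (intro avg_deriv) (auto intro!: derivative_eq_intros)
  have F0: "F 0 = 0" unfolding F_def using avg0 by simp
  have contF: "continuous_on A F" for A
    using dF by (meson DERIV_isCont continuous_at_imp_continuous_on)
  have Fle: "F p \<le> 1" for p
  proof -
    have "F p \<le> avg M bh (\<lambda>_. 1)" unfolding F_def
    proof (rule avg_mono)
      fix s assume s: "s \<in> spins M"
      then have "s 0 = 1 \<or> s 0 = -1" using spins_val M0 by auto
      then show "s 0 * tanh (b * p * (\<Sum>\<mu><M. s \<mu>)) \<le> 1"
        using tanh_real_lt_1 tanh_real_gt_neg1 by (auto intro: less_imp_le)
    qed
    then show ?thesis using avg1 by simp
  qed
  obtain n where Mn: "M = Suc n" using M0 gr0_implies_Suc by blast
  have mom: "avg M bh (\<lambda>s. s 0 * s \<nu>) = (if \<nu> = 0 then 1 else m ^ 2)" if "\<nu> < M" for \<nu>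
  proof (cases "\<nu> = 0")
    case True
    have "avg M bh (\<lambda>s. s 0 * s \<nu>) = avg M bh (\<lambda>_. 1)"
      using True spins_val[OF _ M0] by (intro avg_cong) force
    then show ?thesis using True avg1 by simp
  next
    case False
    have "avg M bh (\<lambda>s. s 0 * s \<nu>) = avg M bh (\<lambda>s. \<Prod>i\<in>{0,\<nu>}. s i)"
      using False by simp
    also have "\<dots> = m ^ card {0, \<nu>}" unfolding m_def
      by (rule avg_moment) (use that M0 in auto)
    finally show ?thesis using False by (simp add: power2_eq_square)
  qed
  have c_eq: "avg M bh (\<lambda>s. s 0 * (b * (\<Sum>\<mu><M. s \<mu>))) = b * (1 + (real M - 1) * m ^ 2)"
  proof -
    have "avg M bh (\<lambda>s. s 0 * (b * (\<Sum>\<mu><M. s \<mu>))) = b * avg M bh (\<lambda>s. \<Sum>\<nu><M. s 0 * s \<nu>)"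
      by (subst avg_cmult[symmetric]) (simp add: sum_distrib_left mult_ac)
    also have "\<dots> = b * (\<Sum>\<nu><M. (if \<nu> = 0 then 1 else m ^ 2))"
      by (simp add: avg_sum mom)
    also have "(\<Sum>\<nu><M. (if \<nu> = 0 then 1 else m ^ 2)) = 1 + (real M - 1) * m ^ 2"
      unfolding Mn by (simp add: sum.lessThan_Suc_shift del: sum.lessThan_Suc)
    finally show ?thesis .
  qed
  have bc: "1 < b * (1 + (real M - 1) * m ^ 2)"
    using assms(2,4) by (simp add: m_def divide_less_eq mult.commute)
  have dH0: "DERIV H 0 :> b * (1 + (real M - 1) * m ^ 2) - 1"
    unfolding H_def using dF[of 0] c_eq by (auto intro!: derivative_eq_intros)
  obtain d where d: "d > 0" "\<And>h. h > 0 \<Longrightarrow> h < d \<Longrightarrow> H 0 < H (0 + h)"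
    using DERIV_pos_inc_right[OF dH0] bc by auto
  have H0: "H 0 = 0" by (simp add: H_def F0)
  have Hpos: "0 < H h" if "0 < h" "h < d" for h using d(2)[OF that] H0 by simp
  define p1 where "p1 = min (d/2) 1"
  have p1: "0 < p1" "p1 < d" "p1 \<le> 1" using d(1) by (auto simp: p1_def)
  have contH: "continuous_on A H" for A unfolding H_def
    by (intro continuous_intros contF)
  have H2: "H 2 \<le> 0" using Fle[of 2] by (simp add: H_def)
  obtain pb where pb: "p1 \<le> pb" "pb \<le> 2" "H pb = 0"
    using IVT2'[of H 2 0 p1, OF H2 _ _ contH] Hpos[OF p1(1,2)] p1(3) by force
  have ex: "pb > 0 \<and> pb = F pb" using pb p1 by (simp add: H_def)
  have noless: False if "0 < p" "p < q" "F p = p" "F q = q" for p q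
  proof -
    define s1 :: "nat \<Rightarrow> real" where "s1 = restrict (\<lambda>_. 1) {..<M}"
    have s1: "s1 \<in> spins M" unfolding s1_def spins_def by auto
    have S1: "(\<Sum>\<nu><M. s1 \<nu>) = real M" by (simp add: s1_def)
    have "avg M bh (\<lambda>s. q * ((\<Sum>\<nu><M. s \<nu>) * tanh (b * p * (\<Sum>\<nu><M. s \<nu>))) - p * ((\<Sum>\<nu><M. s \<nu>) * tanh (b * q * (\<Sum>\<nu><M. s \<nu>)))) 
        = q * (real M * F p) - p * (real M * F q)"
      by (simp add: avg_diff avg_cmult FS)
    also have "\<dots> = 0" using that by simp
    finally have z: "avg M bh (\<lambda>s. q * ((\<Sum>\<nu><M. s \<nu>) * tanh (b * p * (\<Sum>\<nu><M. s \<nu>))) - p * ((\<Sum>\<nu><M. s \<nu>) * tanh (b * q * (\<Sum>\<nu><M. s \<nu>)))) = 0" .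
    have "0 < avg M bh (\<lambda>s. q * ((\<Sum>\<nu><M. s \<nu>) * tanh (b * p * (\<Sum>\<nu><M. s \<nu>))) - p * ((\<Sum>\<nu><M. s \<nu>) * tanh (b * q * (\<Sum>\<nu><M. s \<nu>))))"
      by (rule avg_pos[OF _ s1]) (use term_pos[OF that(1,2) assms(2)] S1 M0 in auto)
    then show False using z by simp
  qed
  have uniq: "p = q" if "0 < p" "0 < q" "F p = p" "F q = q" for p q
    using noless that by (cases p q rule: linorder_cases) auto
  have part2: "\<exists>!pb :: real. pb > 0 \<and> pb = avg M bh (\<lambda>s. s 0 * tanh (b * pb * (\<Sum>\<mu><M. s \<mu>)))"
    using ex uniq unfolding F_def[symmetric] by metis
  have part3: "\<sigma> * pb = avg M bh (\<lambda>s. s \<mu> * tanh (b * (\<Sum>\<nu><M. s \<nu> * (\<sigma> * pb))))"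
    if "pb > 0 \<and> pb = avg M bh (\<lambda>s. s 0 * tanh (b * pb * (\<Sum>\<mu><M. s \<mu>)))" "\<sigma> \<in> {1, -1}" "\<mu> < M" for pb \<sigma> \<mu>
  proof -
    have "avg M bh (\<lambda>s. s \<mu> * tanh (b * (\<Sum>\<nu><M. s \<nu> * (\<sigma> * pb))))
        = avg M bh (\<lambda>s. \<sigma> * (s \<mu> * tanh (b * pb * (\<Sum>\<nu><M. s \<nu>))))"
    proof (rule avg_cong)
      fix s :: "nat \<Rightarrow> real"
      have "b * (\<Sum>\<nu><M. s \<nu> * (\<sigma> * pb)) = \<sigma> * (b * pb * (\<Sum>\<nu><M. s \<nu>))"
        by (simp add: sum_distrib_left[symmetric] sum_distrib_right[symmetric] mult_ac)
      then show "s \<mu> * tanh (b * (\<Sum>\<nu><M. s \<nu> * (\<sigma> * pb))) = \<sigma> * (s \<mu> * tanh (b * pb * (\<Sum>\<nu><M. s \<nu>)))"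
        using that(2) by (auto simp: tanh_minus)
    qed
    also have "\<dots> = \<sigma> * avg M bh (\<lambda>s. s 0 * tanh (b * pb * (\<Sum>\<nu><M. s \<nu>)))"
      using avg_swap[OF that(3), of bh "\<lambda>x. tanh (b * pb * x)"] by (simp add: avg_cmult)
    finally show ?thesis using that(1) by simp
  qed
  define G where "G t = - (b * (real M * t ^ 2) / 2) + avg M bh (\<lambda>s. ln (cosh (b * t * (\<Sum>\<nu><M. s \<nu>))))" for t
  have gG: "gfun M bh b (\<lambda>_. t) = ln 2 + G t" for t
  proof -
    have "avg M bh (\<lambda>s. ln (cosh (b * (\<Sum>\<mu><M. s \<mu> * t)))) = avg M bh (\<lambda>s. ln (cosh (b * t * (\<Sum>\<nu><M. s \<nu>))))"
      by (intro avg_cong) (simp add: sum_distrib_left[symmetric] sum_distrib_right[symmetric] mult_ac)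
    then show ?thesis unfolding gfun_def G_def by simp
  qed
  have dG: "DERIV G t :> b * real M * H t" for t
  proof -
    have d1: "DERIV (\<lambda>t. ln (cosh (b * t * (\<Sum>\<nu><M. s \<nu>)))) t :> (\<Sum>\<nu><M. s \<nu>) * tanh (b * t * (\<Sum>\<nu><M. s \<nu>)) * b" for s :: "nat \<Rightarrow> real"
      by (auto intro!: derivative_eq_intros simp: tanh_def field_simps)
    have "DERIV G t :> - (b * (real M * (2 * t)) / 2) + avg M bh (\<lambda>s. (\<Sum>\<nu><M. s \<nu>) * tanh (b * t * (\<Sum>\<nu><M. s \<nu>)) * b)"
      unfolding G_def by (intro derivative_intros avg_deriv d1) (auto intro!: derivative_eq_intros)
    moreover have "avg M bh (\<lambda>s. (\<Sum>\<nu><M. s \<nu>) * tanh (b * t * (\<Sum>\<nu><M. s \<nu>)) * b) = b * (real M * F t)"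
      using avg_cmult[of M bh b "\<lambda>s. (\<Sum>\<nu><M. s \<nu>) * tanh (b * t * (\<Sum>\<nu><M. s \<nu>))"] FS[of t]
      by (simp add: mult_ac)
    ultimately show ?thesis by (simp add: H_def algebra_simps)
  qed
  obtain z where z: "0 < z" "z < p1" "G p1 - G 0 = (p1 - 0) * (b * real M * H z)"
    using MVT2[OF p1(1), of G "\<lambda>t. b * real M * H t"] dG by blast
  have G0: "G 0 = 0" unfolding G_def using avg0 by simp
  have "0 < (p1 - 0) * (b * real M * H z)"
    using p1 z Hpos[of z] assms(2) M0 by (intro mult_pos_pos) auto
  then have "G p1 > 0" using z(3) G0 by simp
  then have part1: "gfun M bh b (\<lambda>_. p1) > gfun M bh b (\<lambda>_. 0)" using gG[of p1] gG[of 0] G0 by simp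
  show ?thesis using part1 part2 part3 by blast
qed


end
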